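(* Let $G$ be a (claw, bull)-free graph with $\alpha(G)\ge 3$ and $\mathrm{diam}(G)=2$. Then $\ell(G)\ge 6$.
   Context: A claw is a graph isomorphic to $K_{1,3}$; a bull is the graph obtained from a triangle by adding two pendant edges at two different vertices. A graph is (claw, bull)-free if it has no induced claw and no induced bull. $\alpha(G)$ is the independence number of $G$, $\mathrm{diam}(G)$ its diameter, and $\ell(G)$ the length of a longest induced cycle in $G$. *)

theory Defs
  imports Main "HOL-Library.Extended_Nat"
begin

definition graph :: "'a set \<Rightarrow> ('a \<Rightarrow> 'a \<Rightarrow> bool) \<Rightarrow> bool" where
  "graph V E \<longleftrightarrow> finite V \<and> (\<forall>u v. E u v \<longrightarrow> u \<in> V \<and> v \<in> V)
     \<and> (\<forall>u v. E u v \<longrightarrow> E v u) \<and> (\<forall>u. \<not> E u u)"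

definition claw_free :: "'a set \<Rightarrow> ('a \<Rightarrow> 'a \<Rightarrow> bool) \<Rightarrow> bool" where
  "claw_free V E \<longleftrightarrow> \<not> (\<exists>a\<in>V. \<exists>b\<in>V. \<exists>c\<in>V. \<exists>d\<in>V.
      distinct [a, b, c, d] \<and> E a b \<and> E a c \<and> E a d
      \<and> \<not> E b c \<and> \<not> E b d \<and> \<not> E c d)"

definition bull_free :: "'a set \<Rightarrow> ('a \<Rightarrow> 'a \<Rightarrow> bool) \<Rightarrow> bool" where
  "bull_free V E \<longleftrightarrow> \<not> (\<exists>a\<in>V. \<exists>b\<in>V. \<exists>c\<in>V. \<exists>d\<in>V. \<exists>e\<in>V.
      distinct [a, b, c, d, e] \<and> E a b \<and> E b c \<and> E a c \<and> E a d \<and> E b e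
      \<and> \<not> E a e \<and> \<not> E b d \<and> \<not> E c d \<and> \<not> E c e \<and> \<not> E d e)"

definition independent :: "'a set \<Rightarrow> ('a \<Rightarrow> 'a \<Rightarrow> bool) \<Rightarrow> 'a set \<Rightarrow> bool" where
  "independent V E S \<longleftrightarrow> S \<subseteq> V \<and> (\<forall>u\<in>S. \<forall>v\<in>S. \<not> E u v)"

definition alpha :: "'a set \<Rightarrow> ('a \<Rightarrow> 'a \<Rightarrow> bool) \<Rightarrow> nat" where
  "alpha V E = Max {card S | S. independent V E S}"

definition walk :: "'a set \<Rightarrow> ('a \<Rightarrow> 'a \<Rightarrow> bool) \<Rightarrow> 'a list \<Rightarrow> bool" where
  "walk V E xs \<longleftrightarrow> xs \<noteq> [] \<and> set xs \<subseteq> V \<and> (\<forall>i. Suc i < length xs \<longrightarrow> E (xs ! i) (xs ! Suc i))"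

definition dist :: "'a set \<Rightarrow> ('a \<Rightarrow> 'a \<Rightarrow> bool) \<Rightarrow> 'a \<Rightarrow> 'a \<Rightarrow> enat" where
  "dist V E u v =
     (if \<exists>xs. walk V E xs \<and> hd xs = u \<and> last xs = v
      then enat (LEAST n. \<exists>xs. walk V E xs \<and> hd xs = u \<and> last xs = v \<and> length xs = Suc n)
      else \<infinity>)"

definition diam :: "'a set \<Rightarrow> ('a \<Rightarrow> 'a \<Rightarrow> bool) \<Rightarrow> enat" where
  "diam V E = (SUP p \<in> V \<times> V. dist V E (fst p) (snd p))"

definition induced_cycle :: "'a set \<Rightarrow> ('a \<Rightarrow> 'a \<Rightarrow> bool) \<Rightarrow> 'a list \<Rightarrow> bool" where
  "induced_cycle V E cs \<longleftrightarrow> length cs \<ge> 3 \<and> distinct cs \<and> set cs \<subseteq> V \<and>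
     (\<forall>i < length cs. \<forall>j < length cs.
        E (cs ! i) (cs ! j) \<longleftrightarrow> (j = Suc i mod length cs \<or> i = Suc j mod length cs))"

definition longest_induced_cycle :: "'a set \<Rightarrow> ('a \<Rightarrow> 'a \<Rightarrow> bool) \<Rightarrow> nat" where
  "longest_induced_cycle V E =
     (let L = {length cs | cs. induced_cycle V E cs} in if L = {} then 0 else Max L)"

end

theory Submission
  imports Defs
begin

lemma all6: "(\<forall>i<Suc (Suc (Suc (Suc (Suc (Suc 0))))). P i) = (P 0 \<and> P 1 \<and> P 2 \<and> P 3 \<and> P 4 \<and> P 5)"
proof
  assume "P 0 \<and> P 1 \<and> P 2 \<and> P 3 \<and> P 4 \<and> P 5"
  then show "\<forall>i<Suc (Suc (Suc (Suc (Suc (Suc 0))))). P i"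
    by (auto simp: less_Suc_eq numeral_eq_Suc)
qed (auto simp: numeral_eq_Suc)

lemma cyc6:
  "(\<forall>i < length [a0,a1,a2,a3,a4,a5::'a]. \<forall>j < length [a0,a1,a2,a3,a4,a5].
        E ([a0,a1,a2,a3,a4,a5] ! i) ([a0,a1,a2,a3,a4,a5] ! j) \<longleftrightarrow> (j = Suc i mod length [a0,a1,a2,a3,a4,a5] \<or> i = Suc j mod length [a0,a1,a2,a3,a4,a5]))
   = ((E a0 a0 = False) \<and> (E a0 a1 = True) \<and> (E a0 a2 = False) \<and> (E a0 a3 = False) \<and> (E a0 a4 = False) \<and> (E a0 a5 = True) \<and>
      (E a1 a0 = True) \<and> (E a1 a1 = False) \<and> (E a1 a2 = True) \<and> (E a1 a3 = False) \<and> (E a1 a4 = False) \<and> (E a1 a5 = False) \<and>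
      (E a2 a0 = False) \<and> (E a2 a1 = True) \<and> (E a2 a2 = False) \<and> (E a2 a3 = True) \<and> (E a2 a4 = False) \<and> (E a2 a5 = False) \<and>
      (E a3 a0 = False) \<and> (E a3 a1 = False) \<and> (E a3 a2 = True) \<and> (E a3 a3 = False) \<and> (E a3 a4 = True) \<and> (E a3 a5 = False) \<and>
      (E a4 a0 = False) \<and> (E a4 a1 = False) \<and> (E a4 a2 = False) \<and> (E a4 a3 = True) \<and> (E a4 a4 = False) \<and> (E a4 a5 = True) \<and>
      (E a5 a0 = True) \<and> (E a5 a1 = False) \<and> (E a5 a2 = False) \<and> (E a5 a3 = False) \<and> (E a5 a4 = True) \<and> (E a5 a5 = False))"
  apply (simp only: length_Cons list.size(3) all6)
  apply simp
  done

lemma common_nb: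
  assumes g: "graph V E" and d: "diam V E = 2" and a: "a \<in> V" and b: "b \<in> V"
    and ab: "a \<noteq> b" and nab: "\<not> E a b"
  shows "\<exists>x. E a x \<and> E x b"
proof -
  have "dist V E a b \<le> diam V E"
  proof -
    have "(a,b) \<in> V \<times> V" using a b by simp
    then have "dist V E (fst (a,b)) (snd (a,b)) \<le> (SUP p \<in> V \<times> V. dist V E (fst p) (snd p))"
      by (rule SUP_upper)
    then show ?thesis unfolding diam_def by simp
  qed
  with d have le: "dist V E a b \<le> 2" by simp
  have ex: "\<exists>xs. walk V E xs \<and> hd xs = a \<and> last xs = b"
  proof (rule ccontr)
    assume "\<not> ?thesis"
    then have "dist V E a b = \<infinity>" unfolding dist_def by simp
    with le show False by simp
  qed
  define n where "n = (LEAST n. \<exists>xs. walk V E xs \<and> hd xs = a \<and> last xs = b \<and> length xs = Suc n)"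
  have "dist V E a b = enat n" unfolding dist_def n_def using ex by simp
  with le have n2: "n \<le> 2" by (simp add: numeral_eq_enat)
  have "\<exists>n xs. walk V E xs \<and> hd xs = a \<and> last xs = b \<and> length xs = Suc n"
  proof -
    obtain xs where "walk V E xs \<and> hd xs = a \<and> last xs = b" using ex by blast
    moreover then have "length xs = Suc (length xs - 1)" unfolding walk_def by (cases xs) auto
    ultimately show ?thesis by blast
  qed
  then have "\<exists>xs. walk V E xs \<and> hd xs = a \<and> last xs = b \<and> length xs = Suc n"
    unfolding n_def by (rule LeastI_ex)
  then obtain xs where w: "walk V E xs" and h: "hd xs = a" and l: "last xs = b"
    and len: "length xs = Suc n" by blast
  have hd0: "xs ! 0 = a" using h len by (cases xs) auto
  have lst: "xs ! n = b" using l len last_conv_nth[of xs] by (cases xs) auto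
  have ed: "\<And>i. Suc i < length xs \<Longrightarrow> E (xs ! i) (xs ! Suc i)" using w unfolding walk_def by blast
  consider "n = 0" | "n = 1" | "n = 2" using n2 by linarith
  then show ?thesis
  proof cases
    case 1 then show ?thesis using hd0 lst ab by simp
  next
    case 2 then show ?thesis using hd0 lst nab ed[of 0] len by simp
  next
    case 3
    then have "E (xs ! 0) (xs ! 1)" "E (xs ! 1) (xs ! 2)" using ed[of 0] ed[of 1] len by (auto simp: numeral_2_eq_2)
    then show ?thesis using hd0 lst 3 by auto
  qed
qed

theorem lemma6:
  fixes V :: "'a set" and E :: "'a \<Rightarrow> 'a \<Rightarrow> bool"
  assumes "graph V E"
    and "claw_free V E"
    and "bull_free V E"
    and "alpha V E \<ge> 3"
    and "diam V E = 2"
  shows "longest_induced_cycle V E \<ge> 6"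
proof -
  note g = assms(1)
  have fin: "finite V" and inV: "\<And>u v. E u v \<Longrightarrow> u \<in> V \<and> v \<in> V"
    and sy: "\<And>u v. E u v \<Longrightarrow> E v u" and irr: "\<And>u. \<not> E u u"
    using g unfolding graph_def by auto
  let ?S = "{card S | S. independent V E S}"
  have "?S \<subseteq> card ` Pow V" unfolding independent_def by auto
  then have finS: "finite ?S" using fin by (meson finite_Pow_iff finite_imageI finite_subset)
  have "independent V E {}" unfolding independent_def by simp
  then have neS: "?S \<noteq> {}" by blast
  have "Max ?S \<in> ?S" using finS neS by (rule Max_in)
  then obtain S where iS: "independent V E S" and cS: "card S = alpha V E"
    unfolding alpha_def by auto
  with assms(4) have c3: "card S \<ge> 3" by simp
  then obtain T where "T \<subseteq> S" "card T = 3"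
    by (meson obtain_subset_with_card_n)
  then obtain a b c where T: "T = {a,b,c}" and dabc: "a \<noteq> b" "a \<noteq> c" "b \<noteq> c"
    by (metis card_3_iff)
  with iS \<open>T \<subseteq> S\<close> have abc: "a \<in> V" "b \<in> V" "c \<in> V" "\<not> E a b" "\<not> E a c" "\<not> E b c"
    unfolding independent_def by auto
  obtain x where x: "E a x" "E x b" using common_nb[OF g assms(5)] abc dabc by blast
  obtain y where y: "E b y" "E y c" using common_nb[OF g assms(5)] abc dabc by blast
  obtain z where z: "E c z" "E z a" using common_nb[OF g assms(5)] abc dabc
    by (metis sy)
  have xyzV: "x \<in> V" "y \<in> V" "z \<in> V" using x y z inV by auto
  have claw: "\<And>p q r s. p \<in> V \<Longrightarrow> q \<in> V \<Longrightarrow> r \<in> V \<Longrightarrow> s \<in> V \<Longrightarrow> distinct [p,q,r,s] \<Longrightarrow>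
     E p q \<Longrightarrow> E p r \<Longrightarrow> E p s \<Longrightarrow> \<not> E q r \<Longrightarrow> \<not> E q s \<Longrightarrow> \<not> E r s \<Longrightarrow> False"
    using assms(2) unfolding claw_free_def by blast
  have bull: "\<And>p q r s t. p \<in> V \<Longrightarrow> q \<in> V \<Longrightarrow> r \<in> V \<Longrightarrow> s \<in> V \<Longrightarrow> t \<in> V \<Longrightarrow>
     distinct [p,q,r,s,t] \<Longrightarrow> E p q \<Longrightarrow> E q r \<Longrightarrow> E p r \<Longrightarrow> E p s \<Longrightarrow> E q t \<Longrightarrow>
     \<not> E p t \<Longrightarrow> \<not> E q s \<Longrightarrow> \<not> E r s \<Longrightarrow> \<not> E r t \<Longrightarrow> \<not> E s t \<Longrightarrow> False"
    using assms(3) unfolding bull_free_def by blast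
  have nab: "\<not> E b a" "\<not> E c a" "\<not> E c b" using abc sy by blast+
  have xs: "E x a" "E b x" "E y b" "E c y" "E z c" "E a z" using x y z sy by blast+
  have xn: "x \<noteq> a" "x \<noteq> b" "y \<noteq> b" "y \<noteq> c" "z \<noteq> c" "z \<noteq> a" using x y z irr by metis+
  have xc: "\<not> E x c"
  proof
    assume "E x c"
    have "x \<noteq> c" using x abc by blast
    then show False using claw[of x a b c] xyzV abc dabc x xs xn \<open>E x c\<close> by auto
  qed
  have ya: "\<not> E y a"
  proof
    assume "E y a"
    have "y \<noteq> a" using y abc sy by blast
    then show False using claw[of y a b c] xyzV abc dabc y xs xn \<open>E y a\<close> by auto
  qed
  have zb: "\<not> E z b"
  proof
    assume "E z b"
    have "z \<noteq> b" using z abc sy by blast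
    then show False using claw[of z a b c] xyzV abc dabc z xs xn \<open>E z b\<close> by auto
  qed
  have xc': "\<not> E c x" "\<not> E a y" "\<not> E b z" using xc ya zb sy by blast+
  have xne: "x \<noteq> c" "y \<noteq> a" "z \<noteq> b" using x y z abc sy by blast+
  have xy_ne: "x \<noteq> y" "y \<noteq> z" "x \<noteq> z" using x ya y zb z xc by blast+
  have xy: "\<not> E x y"
  proof
    assume h: "E x y"
    show False using bull[of x y b a c] h xyzV abc dabc x y xs xn xne xy_ne xc ya xc' nab by auto
  qed
  have yz: "\<not> E y z"
  proof
    assume h: "E y z"
    show False using bull[of y z c b a] h xyzV abc dabc z y xs xn xne xy_ne zb ya xc' nab by auto
  qed
  have zx: "\<not> E z x"
  proof
    assume h: "E z x"
    show False using bull[of z x a c b] h xyzV abc dabc z x xs xn xne xy_ne zb xc xc' nab by auto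
  qed
  have nn: "\<not> E y x" "\<not> E z y" "\<not> E x z" using xy yz zx sy by blast+
  have ic0: "\<forall>i < length [a,x,b,y,c,z]. \<forall>j < length [a,x,b,y,c,z].
        E ([a,x,b,y,c,z] ! i) ([a,x,b,y,c,z] ! j) \<longleftrightarrow> (j = Suc i mod length [a,x,b,y,c,z] \<or> i = Suc j mod length [a,x,b,y,c,z])"
    unfolding cyc6
    using x y z xs xc ya zb xc' xy yz zx nn nab abc irr by simp
  have ic: "induced_cycle V E [a,x,b,y,c,z]"
    unfolding induced_cycle_def
    using ic0 abc xyzV dabc xn xne xy_ne by simp
  let ?L = "{length cs | cs. induced_cycle V E cs}"
  have "?L \<subseteq> {..card V}"
  proof
    fix k assume "k \<in> ?L"
    then obtain cs where "induced_cycle V E cs" "k = length cs" by blast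
    then show "k \<in> {..card V}" unfolding induced_cycle_def
      by (metis atMost_iff card_mono distinct_card fin)
  qed
  then have finL: "finite ?L" using finite_subset by blast
  have "6 \<in> ?L" using ic by force
  then have "Max ?L \<ge> 6" using finL by (metis Max_ge)
  moreover have "?L \<noteq> {}" using \<open>6 \<in> ?L\<close> by blast
  ultimately show ?thesis unfolding longest_induced_cycle_def Let_def by presburger
qed

end
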